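(* Let $X=\{x_1,\dots,x_m\}$ be a finite set, let $d$ be a distance measure between hesitant fuzzy sets on $X$ with maximal value $d_{\max}$, and let $f$ be a monotone decreasing function on $[0,d_{\max}]$ with $f(0)\neq f(d_{\max})$. Define $$s_0(A,B)=\frac{f(d(A,B))-f(d_{\max})}{f(0)-f(d_{\max})}.$$ Then $s_0$ is a similarity measure between hesitant fuzzy sets on $X$, i.e. for all HFSs $A,B,C$ on $X$: (P1) $0\le s_0(A,B)\le 1$; (P2) $s_0(A,B)=1\iff A=B$; (P3) $s_0(A,B)=s_0(B,A)$; (P4) if $A\sqsubseteq B\sqsubseteq C$ then $s_0(A,C)\le s_0(A,B)$ and $s_0(A,C)\le s_0(B,C)$.
   Context: A hesitant fuzzy set (HFS) $A$ on $X$ assigns to each $x\in X$ a hesitant fuzzy element $h_A(x)$, a finite nonempty set of values in $[0,1]$; $n(h_A(x))$ is its number of values. When comparing $A,B$ at $x$, $n_x=\max\{n(h_A(x)),n(h_B(x))\}$ and the shorter element is extended to length $n_x$ by repeatedly adding its minimum value; values are arranged in decreasing order and $h_A^{\sigma(j)}(x)$ is the $j$-th one. $h_A(x)\preceq h_B(x)$ means $h_A^{\sigma(j)}(x)\le h_B^{\sigma(j)}(x)$ for all $j\le n_x$; $h_A(x)=h_B(x)$ means equality for all $j$; $A\sqsubseteq B$ means $h_A(x)\preceq h_B(x)$ for all $x\in X$; $A=B$ means $h_A(x)=h_B(x)$ for all $x$. A distance measure is a function $d$ on pairs of HFSs on $X$ with maximal value $d_{\max}=\max\{d(A,B)\}$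 satisfying: (D1) $0\le d(A,B)\le d_{\max}$; (D2) $d(A,B)=0\iff A=B$; (D3) $d(A,B)=d(B,A)$; (D4) if $A\sqsubseteq B\sqsubseteq C$ then $d(A,B)\le d(A,C)$ and $d(B,C)\le d(A,C)$. *)

theory Defs
  imports Complex_Main
begin

definition hfs :: "'a set \<Rightarrow> ('a \<Rightarrow> real set) \<Rightarrow> bool" where
  "hfs X h \<longleftrightarrow> (\<forall>x\<in>X. finite (h x) \<and> h x \<noteq> {} \<and> h x \<subseteq> {0..1})"

text \<open>Values of a hesitant fuzzy element in decreasing order, extended to length n
  by repeatedly adding its minimum value; the j-th entry (0-based) is h^sigma(j+1).\<close>
definition hfe_ext :: "real set \<Rightarrow> nat \<Rightarrow> real list" where
  "hfe_ext H n = rev (sorted_list_of_set H) @ replicate (n - card H) (Min H)"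

definition hfe_le :: "real set \<Rightarrow> real set \<Rightarrow> bool" where
  "hfe_le H K \<longleftrightarrow> (let n = max (card H) (card K) in
      \<forall>j<n. hfe_ext H n ! j \<le> hfe_ext K n ! j)"

definition hfe_eq :: "real set \<Rightarrow> real set \<Rightarrow> bool" where
  "hfe_eq H K \<longleftrightarrow> (let n = max (card H) (card K) in
      \<forall>j<n. hfe_ext H n ! j = hfe_ext K n ! j)"

definition hfs_sub :: "'a set \<Rightarrow> ('a \<Rightarrow> real set) \<Rightarrow> ('a \<Rightarrow> real set) \<Rightarrow> bool" where
  "hfs_sub X A B \<longleftrightarrow> (\<forall>x\<in>X. hfe_le (A x) (B x))"

definition hfs_eq :: "'a set \<Rightarrow> ('a \<Rightarrow> real set) \<Rightarrow> ('a \<Rightarrow> real set) \<Rightarrow> bool" where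
  "hfs_eq X A B \<longleftrightarrow> (\<forall>x\<in>X. hfe_eq (A x) (B x))"

definition distance_measure ::
  "'a set \<Rightarrow> (('a \<Rightarrow> real set) \<Rightarrow> ('a \<Rightarrow> real set) \<Rightarrow> real) \<Rightarrow> real \<Rightarrow> bool" where
  "distance_measure X d dmax \<longleftrightarrow>
     (\<exists>A B. hfs X A \<and> hfs X B \<and> d A B = dmax) \<and>
     (\<forall>A B. hfs X A \<and> hfs X B \<longrightarrow> 0 \<le> d A B \<and> d A B \<le> dmax) \<and>
     (\<forall>A B. hfs X A \<and> hfs X B \<longrightarrow> (d A B = 0 \<longleftrightarrow> hfs_eq X A B)) \<and>
     (\<forall>A B. hfs X A \<and> hfs X B \<longrightarrow> d A B = d B A) \<and>
     (\<forall>A B C. hfs X A \<and> hfs X B \<and> hfs X C \<and> hfs_sub X A B \<and> hfs_sub X B C \<longrightarrow>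
         d A B \<le> d A C \<and> d B C \<le> d A C)"

definition similarity_measure ::
  "'a set \<Rightarrow> (('a \<Rightarrow> real set) \<Rightarrow> ('a \<Rightarrow> real set) \<Rightarrow> real) \<Rightarrow> bool" where
  "similarity_measure X s \<longleftrightarrow>
     (\<forall>A B. hfs X A \<and> hfs X B \<longrightarrow> 0 \<le> s A B \<and> s A B \<le> 1) \<and>
     (\<forall>A B. hfs X A \<and> hfs X B \<longrightarrow> (s A B = 1 \<longleftrightarrow> hfs_eq X A B)) \<and>
     (\<forall>A B. hfs X A \<and> hfs X B \<longrightarrow> s A B = s B A) \<and>
     (\<forall>A B C. hfs X A \<and> hfs X B \<and> hfs X C \<and> hfs_sub X A B \<and> hfs_sub X B C \<longrightarrow>
         s A C \<le> s A B \<and> s A C \<le> s B C)"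

end

theory Submission
  imports Defs
begin

theorem theorem5:
  fixes X :: "'a set" and d :: "('a \<Rightarrow> real set) \<Rightarrow> ('a \<Rightarrow> real set) \<Rightarrow> real"
    and dmax :: real and f :: "real \<Rightarrow> real"
  assumes "finite X"
    and "distance_measure X d dmax"
    and "\<forall>x\<in>{0..dmax}. \<forall>y\<in>{0..dmax}. x < y \<longrightarrow> f y < f x"
    and "f 0 \<noteq> f dmax"
  shows "similarity_measure X (\<lambda>A B. (f (d A B) - f dmax) / (f 0 - f dmax))"
proof -
  note D = assms(2)[unfolded distance_measure_def]
  have mono: "\<And>x y. 0 \<le> x \<Longrightarrow> x < y \<Longrightarrow> y \<le> dmax \<Longrightarrow> f y < f x" using assms(3) by auto
  have dpos: "0 \<le> dmax" using D by blast
  have dne: "dmax \<noteq> 0" using assms(4) by auto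
  have fpos: "f dmax < f 0" using mono[of 0 dmax] dpos dne by auto
  have le: "\<And>x y. 0 \<le> x \<Longrightarrow> x \<le> y \<Longrightarrow> y \<le> dmax \<Longrightarrow> f y \<le> f x"
    using mono by (metis order_le_less)
  let ?s = "\<lambda>A B. (f (d A B) - f dmax) / (f 0 - f dmax)"
  have rng: "0 \<le> d A B \<and> d A B \<le> dmax" if "hfs X A" "hfs X B" for A B using D that by blast
  show ?thesis unfolding similarity_measure_def
  proof (intro conjI allI impI)
    fix A B assume h: "hfs X A \<and> hfs X B"
    hence r: "0 \<le> d A B" "d A B \<le> dmax" using rng by auto
    have a: "f (d A B) \<le> f 0" using le[of 0 "d A B"] r dpos by auto
    have b: "f dmax \<le> f (d A B)" using le[of "d A B" dmax] r by auto
    show "0 \<le> ?s A B" using b fpos by simp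
    show "?s A B \<le> 1" using a fpos by simp
    have "?s A B = 1 \<longleftrightarrow> f (d A B) = f 0" using fpos by (auto simp add: field_simps)
    also have "\<dots> \<longleftrightarrow> d A B = 0" using mono[of 0 "d A B"] r by force
    also have "\<dots> \<longleftrightarrow> hfs_eq X A B" using D h by blast
    finally show "?s A B = 1 \<longleftrightarrow> hfs_eq X A B" .
    show "?s A B = ?s B A" using D h by metis
  next
    fix A B C assume h: "hfs X A \<and> hfs X B \<and> hfs X C \<and> hfs_sub X A B \<and> hfs_sub X B C"
    hence m: "d A B \<le> d A C" "d B C \<le> d A C" using D by blast+
    have r: "0 \<le> d A B" "0 \<le> d B C" "d A C \<le> dmax" using rng h by auto
    have "f (d A C) \<le> f (d A B)" "f (d A C) \<le> f (d B C)" using le m r by auto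
    thus "?s A C \<le> ?s A B" "?s A C \<le> ?s B C" using fpos by (simp_all add: divide_right_mono)
  qed
qed

end
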